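(* Let $(\mathbf{i},\mathbf{a})\in I^m\times\mathbb{C}^m$, let $\pi\in S_m$ be $(\mathbf{i},\mathbf{a})$-admissible, and let $\pi=s_{k_r}\cdots s_{k_1}$ be a reduced expression in simple transpositions. Then for each $1\le p\le r$, $s_{k_p}$ is $(s_{k_p}\cdots s_{k_1}(\mathbf{i}),\,s_{k_p}\cdots s_{k_1}(\mathbf{a}))$-admissible.
   Context: $I$ is the vertex set of a finite simple bipartite graph $I=I_{\bar0}\sqcup I_{\bar1}$, with every edge oriented from its even to its odd endpoint; write $i\leftarrow j$ if there is an oriented edge from $j$ to $i$. $S_m$ acts on $m$-tuples by $\pi(\mathbf{a})=(a_{\pi^{-1}(1)},\dots,a_{\pi^{-1}(m)})$; $s_k=(k,k+1)$. For $(\mathbf{i},\mathbf{a})\in I^m\times\mathbb{C}^m$, distinct indices $k,l$ are not $(\mathbf{i},\mathbf{a})$-switchable if $i_k\leftarrow i_l$ and $a_k=a_l+1$ (checked for the pair in either order), and switchable otherwise. $\pi\in S_m$ is $(\mathbf{i},\mathbf{a})$-admissible if for every non-switchable pair $k,l$, $\pi(k),\pi(l)$ are in the same relative order as $k,l$. *)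

theory Defs
  imports Complex_Main "HOL-Combinatorics.Permutations"
begin

definition bipartite_graph :: "'v set \<Rightarrow> 'v set \<Rightarrow> 'v set \<Rightarrow> ('v \<Rightarrow> 'v \<Rightarrow> bool) \<Rightarrow> bool" where
  "bipartite_graph VI VI0 VI1 E \<longleftrightarrow>
     finite VI \<and> VI = VI0 \<union> VI1 \<and> VI0 \<inter> VI1 = {} \<and>
     (\<forall>x y. E x y \<longrightarrow> x \<in> VI \<and> y \<in> VI) \<and>
     (\<forall>x y. E x y \<longrightarrow> E y x) \<and> (\<forall>x. \<not> E x x) \<and>
     (\<forall>x y. E x y \<longrightarrow> (x \<in> VI0 \<and> y \<in> VI1) \<or> (x \<in> VI1 \<and> y \<in> VI0))"

text \<open>Edges are oriented from the even to the odd endpoint;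
  arrow VI0 VI1 E i j means  i \<leftarrow> j, i.e. there is an oriented edge from j to i.\<close>
definition arrow :: "'v set \<Rightarrow> 'v set \<Rightarrow> ('v \<Rightarrow> 'v \<Rightarrow> bool) \<Rightarrow> 'v \<Rightarrow> 'v \<Rightarrow> bool" where
  "arrow VI0 VI1 E i j \<longleftrightarrow> E j i \<and> j \<in> VI0 \<and> i \<in> VI1"

text \<open>m-tuples are functions on positions 1..m.  A permutation \<pi> of {1..m}
  acts by \<pi>(a) = (a (inv \<pi> 1), ..., a (inv \<pi> m)).\<close>
definition act :: "(nat \<Rightarrow> nat) \<Rightarrow> (nat \<Rightarrow> 'b) \<Rightarrow> (nat \<Rightarrow> 'b)" where
  "act \<pi> x = (\<lambda>k. x (inv \<pi> k))"

definition sk :: "nat \<Rightarrow> nat \<Rightarrow> nat" where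
  "sk k = Transposition.transpose k (k + 1)"

definition switchable :: "'v set \<Rightarrow> 'v set \<Rightarrow> ('v \<Rightarrow> 'v \<Rightarrow> bool) \<Rightarrow>
    (nat \<Rightarrow> 'v) \<Rightarrow> (nat \<Rightarrow> complex) \<Rightarrow> nat \<Rightarrow> nat \<Rightarrow> bool" where
  "switchable VI0 VI1 E i a k l \<longleftrightarrow>
     \<not> ((arrow VI0 VI1 E (i k) (i l) \<and> a k = a l + 1) \<or>
        (arrow VI0 VI1 E (i l) (i k) \<and> a l = a k + 1))"

definition admissible :: "nat \<Rightarrow> 'v set \<Rightarrow> 'v set \<Rightarrow> ('v \<Rightarrow> 'v \<Rightarrow> bool) \<Rightarrow>
    (nat \<Rightarrow> 'v) \<Rightarrow> (nat \<Rightarrow> complex) \<Rightarrow> (nat \<Rightarrow> nat) \<Rightarrow> bool" where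
  "admissible m VI0 VI1 E i a \<pi> \<longleftrightarrow>
     (\<forall>k\<in>{1..m}. \<forall>l\<in>{1..m}. k \<noteq> l \<and> \<not> switchable VI0 VI1 E i a k l \<longrightarrow>
        (k < l \<longleftrightarrow> \<pi> k < \<pi> l))"

text \<open>For ks = [k_1, ..., k_r], word_prod ks = s_{k_r} \<circ> ... \<circ> s_{k_1}.\<close>
definition word_prod :: "nat list \<Rightarrow> nat \<Rightarrow> nat" where
  "word_prod ks = fold (\<lambda>k acc. sk k \<circ> acc) ks id"

definition is_word :: "nat \<Rightarrow> nat list \<Rightarrow> bool" where
  "is_word m ks \<longleftrightarrow> (\<forall>k\<in>set ks. 1 \<le> k \<and> k < m)"

definition reduced_expr :: "nat \<Rightarrow> (nat \<Rightarrow> nat) \<Rightarrow> nat list \<Rightarrow> bool" where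
  "reduced_expr m \<pi> ks \<longleftrightarrow> is_word m ks \<and> word_prod ks = \<pi> \<and>
     (\<forall>ks'. is_word m ks' \<and> word_prod ks' = \<pi> \<longrightarrow> length ks \<le> length ks')"

end

theory Submission
  imports Defs
begin

abbreviation "stepf \<equiv> (\<lambda>k acc. sk k \<circ> acc)"

lemma fold_comp: "fold stepf ys (g::nat\<Rightarrow>nat) = fold stepf ys id \<circ> g"
proof (induction ys arbitrary: g)
  case Nil then show ?case by simp
next
  case (Cons y ys)
  have h: "fold stepf ys id \<circ> sk y = fold stepf (y#ys) id"
  proof -
    have "fold stepf ys id \<circ> sk y = fold stepf ys (sk y)" by (rule Cons.IH[of "sk y", symmetric])
    also have "\<dots> = fold stepf (y#ys) id" by simp
    finally show ?thesis .
  qed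
  have "fold stepf (y#ys) g = fold stepf ys (sk y \<circ> g)" by simp
  also have "\<dots> = fold stepf ys id \<circ> sk y \<circ> g" using Cons.IH[of "sk y \<circ> g"] by (simp only: comp_assoc)
  also have "\<dots> = fold stepf (y#ys) id \<circ> g" by (simp only: h)
  finally show ?case .
qed

lemma wp_append: "word_prod (xs @ ys) = word_prod ys \<circ> word_prod xs"
  unfolding word_prod_def by (simp add: fold_comp[of ys "fold stepf xs id"])

lemma wp_Nil: "word_prod [] = id" by (simp add: word_prod_def)
lemma wp_single: "word_prod [k] = sk k" by (simp add: word_prod_def)

lemma W_Suc: "n < length ks \<Longrightarrow> word_prod (take (Suc n) ks) = sk (ks!n) \<circ> word_prod (take n ks)"
  by (simp add: take_Suc_conv_app_nth wp_append wp_single)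

lemma bij_sk: "bij (sk k)" by (simp add: sk_def)
lemma inv_sk: "inv (sk k) = sk k" by (simp add: sk_def)

lemma bij_wp: "bij (word_prod ks)"
proof (induction ks rule: rev_induct)
  case Nil then show ?case by (simp only: wp_Nil bij_id)
next
  case (snoc x xs) then show ?case unfolding wp_append wp_single by (rule bij_comp[OF _ bij_sk])
qed

lemma perm_wp: "is_word m ks \<Longrightarrow> word_prod ks permutes {1..m}"
proof (induction ks rule: rev_induct)
  case Nil then show ?case by (simp only: wp_Nil permutes_id)
next
  case (snoc x xs)
  then have "is_word m xs" "1 \<le> x" "x < m" by (auto simp: is_word_def)
  then have "sk x permutes {1..m}" unfolding sk_def by (intro permutes_swap_id) auto
  with snoc.IH[OF \<open>is_word m xs\<close>] show ?case unfolding wp_append wp_single by (intro permutes_compose) auto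
qed

lemma sk_order_keep: "a \<noteq> b \<Longrightarrow> {a,b} \<noteq> {k, Suc k} \<Longrightarrow> (sk k a < sk k b \<longleftrightarrow> a < b)"
  unfolding sk_def Transposition.transpose_def by (auto split: if_splits)

lemma sk_order_swap: "{a,b} = {k, Suc k} \<Longrightarrow> (sk k a < sk k b \<longleftrightarrow> b < a)"
  unfolding sk_def Transposition.transpose_def by (auto simp: doubleton_eq_iff split: if_splits)

lemma sk_conj:
  assumes "inj \<sigma>" "{\<sigma> x, \<sigma> y} = {k, Suc k}" "x \<noteq> y"
  shows "sk k \<circ> \<sigma> = \<sigma> \<circ> Transposition.transpose x y"
proof
  fix z
  show "(sk k \<circ> \<sigma>) z = (\<sigma> \<circ> Transposition.transpose x y) z"
  proof (cases "z = x \<or> z = y")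
    case True then show ?thesis using assms(2,3)
      unfolding sk_def Transposition.transpose_def by (auto simp: doubleton_eq_iff)
  next
    case False
    then have "\<sigma> z \<noteq> \<sigma> x" "\<sigma> z \<noteq> \<sigma> y" using assms(1) by (auto dest: injD)
    then have "\<sigma> z \<noteq> k" "\<sigma> z \<noteq> Suc k" using assms(2) by (auto simp: doubleton_eq_iff)
    then show ?thesis using False unfolding sk_def Transposition.transpose_def by auto
  qed
qed

lemma delete_two:
  assumes jl: "j < l" and ll: "l < length ks" and xy: "x \<noteq> y"
    and sj: "{word_prod (take j ks) x, word_prod (take j ks) y} = {ks!j, Suc (ks!j)}"
    and sl: "{word_prod (take l ks) x, word_prod (take l ks) y} = {ks!l, Suc (ks!l)}"
  shows "word_prod (take j ks @ take (l-j-1) (drop (Suc j) ks) @ drop (Suc l) ks) = word_prod ks"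
proof -
  define A where "A = take j ks"
  define B where "B = take (l-j-1) (drop (Suc j) ks)"
  define C where "C = drop (Suc l) ks"
  define t where "t = Transposition.transpose x y"
  have dec: "ks = A @ [ks!j] @ B @ [ks!l] @ C"
  proof -
    have e1: "drop (Suc j) ks = B @ drop (l-j-1) (drop (Suc j) ks)" unfolding B_def
      by (rule append_take_drop_id[symmetric])
    have e2: "drop (l-j-1) (drop (Suc j) ks) = drop l ks" using jl by simp
    have e3: "drop l ks = ks!l # C" unfolding C_def using ll by (simp add: Cons_nth_drop_Suc)
    have e4: "drop j ks = ks!j # drop (Suc j) ks" using jl ll by (simp add: Cons_nth_drop_Suc)
    have "ks = A @ drop j ks" unfolding A_def by simp
    also have "\<dots> = A @ ks!j # drop (Suc j) ks" by (simp only: e4)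
    also have "\<dots> = A @ ks!j # B @ ks!l # C" by (subst e1, simp only: e2 e3)
    finally show ?thesis by simp
  qed
  have lenA: "length A = j" unfolding A_def using jl ll by simp
  have lenB: "length B = l - j - 1" unfolding B_def using jl ll by simp
  have tl: "take l ks = A @ [ks!j] @ B"
  proof -
    have "take l ks = take l (A @ [ks!j] @ B @ [ks!l] @ C)" using dec by simp
    also have "\<dots> = A @ [ks!j] @ B"
    proof -
      have lj: "l = length A + Suc (length B)" using lenA lenB jl by simp
      show ?thesis unfolding lj by simp
    qed
    finally show ?thesis .
  qed
  have Wl: "word_prod (take l ks) = word_prod B \<circ> sk (ks!j) \<circ> word_prod A"
    unfolding tl wp_append wp_single by (simp add: comp_assoc)
  have c1: "sk (ks!j) \<circ> word_prod A = word_prod A \<circ> t"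
    unfolding t_def by (rule sk_conj) (use sj xy bij_wp[of A] in \<open>auto simp: A_def bij_def\<close>)
  have c2: "sk (ks!l) \<circ> word_prod (take l ks) = word_prod (take l ks) \<circ> t"
    unfolding t_def by (rule sk_conj) (use sl xy bij_wp[of "take l ks"] in \<open>auto simp: bij_def\<close>)
  have tt: "t \<circ> t = id" unfolding t_def by simp
  have "word_prod ks = word_prod C \<circ> (sk (ks!l) \<circ> word_prod (take l ks))"
  proof -
    have dec2: "ks = take l ks @ [ks!l] @ C"
      apply (subst tl) apply (simp only: append_assoc) apply (rule dec) done
    have "word_prod ks = word_prod (take l ks @ [ks!l] @ C)" by (rule arg_cong[OF dec2])
    then show ?thesis by (simp only: wp_append wp_single comp_assoc)
  qed
  also have "\<dots> = word_prod C \<circ> (word_prod B \<circ> word_prod A)"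
  proof -
    have c1': "sk (ks!j) \<circ> (word_prod A \<circ> g) = word_prod A \<circ> (t \<circ> g)" for g
      using c1 by (metis comp_assoc)
    have tt': "t \<circ> (t \<circ> g) = g" for g using tt by (metis comp_assoc id_comp)
    have "word_prod C \<circ> (sk (ks!l) \<circ> word_prod (take l ks)) = word_prod C \<circ> (word_prod (take l ks) \<circ> t)"
      by (simp only: c2)
    also have "\<dots> = word_prod C \<circ> (word_prod B \<circ> word_prod A)"
      by (simp only: Wl comp_assoc c1' tt' tt comp_id)
    finally show ?thesis .
  qed
  also have "\<dots> = word_prod (A @ B @ C)" by (simp add: wp_append comp_assoc)
  finally show ?thesis unfolding A_def B_def C_def by simp
qed

lemma reduced_no_double:
  assumes red: "reduced_expr m \<pi> ks" and jl: "j < l" and ll: "l < length ks" and xy: "x \<noteq> y"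
    and sj: "{word_prod (take j ks) x, word_prod (take j ks) y} = {ks!j, Suc (ks!j)}"
    and sl: "{word_prod (take l ks) x, word_prod (take l ks) y} = {ks!l, Suc (ks!l)}"
  shows False
proof -
  define ks' where "ks' = take j ks @ take (l-j-1) (drop (Suc j) ks) @ drop (Suc l) ks"
  have "word_prod ks' = \<pi>" using delete_two[OF jl ll xy sj sl] red unfolding ks'_def reduced_expr_def by simp
  moreover have "is_word m ks'"
  proof -
    have "set ks' \<subseteq> set ks" unfolding ks'_def by (auto dest: in_set_takeD in_set_dropD)
    then show ?thesis using red unfolding reduced_expr_def is_word_def by blast
  qed
  moreover have "length ks' < length ks" unfolding ks'_def using jl ll by simp
  ultimately show False using red unfolding reduced_expr_def by (metis not_le)
qed

lemma keep:
  assumes uv: "u \<noteq> v"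
  shows "n \<le> length ks \<Longrightarrow> n0 \<le> n \<Longrightarrow>
    (\<forall>j. n0 \<le> j \<and> j < n \<longrightarrow> {word_prod (take j ks) u, word_prod (take j ks) v} \<noteq> {ks!j, Suc (ks!j)}) \<Longrightarrow>
    (word_prod (take n ks) u < word_prod (take n ks) v \<longleftrightarrow> word_prod (take n0 ks) u < word_prod (take n0 ks) v)"
proof (induction n)
  case 0 then show ?case by simp
next
  case (Suc n)
  show ?case
  proof (cases "n0 = Suc n")
    case True then show ?thesis by simp
  next
    case False
    then have n0n: "n0 \<le> n" using Suc.prems by simp
    have ne: "word_prod (take n ks) u \<noteq> word_prod (take n ks) v"
      using uv bij_wp[of "take n ks"] by (auto simp: bij_def dest: injD)
    have ns: "{word_prod (take n ks) u, word_prod (take n ks) v} \<noteq> {ks!n, Suc (ks!n)}"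
      using Suc.prems n0n by auto
    have "word_prod (take (Suc n) ks) u < word_prod (take (Suc n) ks) v \<longleftrightarrow>
          word_prod (take n ks) u < word_prod (take n ks) v"
      using W_Suc[of n ks] Suc.prems(1) sk_order_keep[OF ne ns] by simp
    also have "\<dots> \<longleftrightarrow> word_prod (take n0 ks) u < word_prod (take n0 ks) v"
      using Suc.IH Suc.prems n0n by simp
    finally show ?thesis .
  qed
qed

lemma switchable_sym: "switchable VI0 VI1 E i a k l = switchable VI0 VI1 E i a l k"
  unfolding switchable_def by auto

lemma switchable_act: "switchable VI0 VI1 E (act w i) (act w a) x y = switchable VI0 VI1 E i a (inv w x) (inv w y)"
  unfolding switchable_def act_def by simp

theorem corollary5p7:
  fixes VI VI0 VI1 :: "'v set" and E :: "'v \<Rightarrow> 'v \<Rightarrow> bool"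
    and m :: nat and i :: "nat \<Rightarrow> 'v" and a :: "nat \<Rightarrow> complex"
    and \<pi> :: "nat \<Rightarrow> nat" and ks :: "nat list"
  assumes "bipartite_graph VI VI0 VI1 E"
    and "\<forall>k\<in>{1..m}. i k \<in> VI"
    and "\<pi> permutes {1..m}"
    and "admissible m VI0 VI1 E i a \<pi>"
    and "reduced_expr m \<pi> ks"
  shows "\<forall>p\<in>{1..length ks}.
           admissible m VI0 VI1 E
             (act (word_prod (take p ks)) i) (act (word_prod (take p ks)) a)
             (sk (ks ! (p - 1)))"
proof
  fix p assume p: "p \<in> {1..length ks}"
  have red: "reduced_expr m \<pi> ks" by fact
  have adm: "admissible m VI0 VI1 E i a \<pi>" by fact
  have wd: "is_word m ks" and wpi: "word_prod ks = \<pi>" using red unfolding reduced_expr_def by auto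
  define q where "q = p - 1"
  have qr: "q < length ks" and pq: "p = Suc q" using p unfolding q_def by auto
  define kq where "kq = ks!q"
  define W where "W = (\<lambda>n. word_prod (take n ks))"
  have kq: "1 \<le> kq" "kq < m" using wd qr unfolding kq_def is_word_def by (auto dest: nth_mem)
  have "is_word m (take q ks)" using wd unfolding is_word_def by (auto dest: in_set_takeD)
  then have permq: "W q permutes {1..m}" unfolding W_def by (rule perm_wp)
  have bijq: "bij (W q)" unfolding W_def by (rule bij_wp)
  define u where "u = inv (W q) kq"
  define v where "v = inv (W q) (Suc kq)"
  have Wu: "W q u = kq" unfolding u_def using bijq by (simp add: bij_is_surj surj_f_inv_f)
  have Wv: "W q v = Suc kq" unfolding v_def using bijq by (simp add: bij_is_surj surj_f_inv_f)
  have uv: "u \<noteq> v" using Wu Wv by auto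
  have ipq: "inv (W q) permutes {1..m}" using permq by (rule permutes_inv)
  have um: "u \<in> {1..m}" unfolding u_def using kq permutes_in_image[OF ipq] by simp
  have vm: "v \<in> {1..m}" unfolding v_def using kq permutes_in_image[OF ipq] by simp
  have swq: "{W q u, W q v} = {ks!q, Suc (ks!q)}" using Wu Wv kq_def by simp
  have noswap: "\<forall>j. n0 \<le> j \<and> j < n \<longrightarrow> {W j u, W j v} \<noteq> {ks!j, Suc (ks!j)}"
    if "n \<le> length ks" "q < n0 \<or> n \<le> q" for n0 n
  proof (intro allI impI)
    fix j assume j: "n0 \<le> j \<and> j < n"
    show "{W j u, W j v} \<noteq> {ks!j, Suc (ks!j)}"
    proof
      assume sj: "{W j u, W j v} = {ks!j, Suc (ks!j)}"
      show False
      proof (cases "j < q")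
        case True
        show False by (rule reduced_no_double[OF red True qr uv]) (use sj swq in \<open>simp_all add: W_def\<close>)
      next
        case False
        then have "q < j" using j that by auto
        moreover have "j < length ks" using j that by auto
        ultimately show False
          by (rule reduced_no_double[OF red _ _ uv]) (use sj swq in \<open>simp_all add: W_def\<close>)
      qed
    qed
  qed
  have f0: "W 0 u < W 0 v \<longleftrightarrow> u < v" unfolding W_def by (simp add: wp_Nil)
  have fq: "W q u < W q v \<longleftrightarrow> W 0 u < W 0 v"
    unfolding W_def by (rule keep[OF uv]) (use qr noswap[of q 0] in \<open>auto simp: W_def\<close>)
  have WSq: "W (Suc q) = sk kq \<circ> W q" unfolding W_def kq_def using qr by (rule W_Suc)
  have fSq: "\<not> W (Suc q) u < W (Suc q) v" unfolding WSq using Wu Wv by (simp add: sk_def)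
  have fr: "W (length ks) u < W (length ks) v \<longleftrightarrow> W (Suc q) u < W (Suc q) v"
    unfolding W_def by (rule keep[OF uv]) (use qr noswap[of "length ks" "Suc q"] in \<open>auto simp: W_def\<close>)
  have Wr: "W (length ks) = \<pi>" unfolding W_def using wpi by simp
  have ltuv: "u < v" using f0 fq Wu Wv by simp
  have pivu: "\<not> \<pi> u < \<pi> v" using fr fSq Wr by simp
  have sw: "switchable VI0 VI1 E i a u v"
  proof (rule ccontr)
    assume "\<not> switchable VI0 VI1 E i a u v"
    then have "u < v \<longleftrightarrow> \<pi> u < \<pi> v" using adm um vm uv unfolding admissible_def by blast
    then show False using ltuv pivu by simp
  qed
  have invp: "inv (W p) = inv (W q) \<circ> sk kq"
    unfolding pq WSq by (simp add: o_inv_distrib bij_sk bijq inv_sk)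
  have ip1: "inv (W p) kq = v" unfolding invp v_def by (simp add: sk_def)
  have ip2: "inv (W p) (Suc kq) = u" unfolding invp u_def by (simp add: sk_def)
  show "admissible m VI0 VI1 E (act (word_prod (take p ks)) i) (act (word_prod (take p ks)) a) (sk (ks ! (p - 1)))"
    unfolding admissible_def
  proof (intro ballI impI)
    fix x y assume xy: "x \<in> {1..m}" "y \<in> {1..m}"
      and ns: "x \<noteq> y \<and> \<not> switchable VI0 VI1 E (act (word_prod (take p ks)) i) (act (word_prod (take p ks)) a) x y"
    have ns': "\<not> switchable VI0 VI1 E i a (inv (W p) x) (inv (W p) y)"
      using ns switchable_act unfolding W_def by metis
    show "x < y \<longleftrightarrow> sk (ks ! (p - 1)) x < sk (ks ! (p - 1)) y"
    proof (cases "{x, y} = {kq, Suc kq}")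
      case True
      then have "(x = kq \<and> y = Suc kq) \<or> (x = Suc kq \<and> y = kq)" by (auto simp: doubleton_eq_iff)
      then have False using ns' sw switchable_sym ip1 ip2 by metis
      then show ?thesis ..
    next
      case False
      then show ?thesis using sk_order_keep[of x y kq] ns unfolding kq_def q_def by simp
    qed
  qed
qed

end
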